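(* Let $\mu$ be a positive Borel measure on $\mathbb{R}$, absolutely continuous with respect to Lebesgue measure, with finite moments of all orders, supported on a set $E$ with infinitely many points whose convex hull is $[a,b]$, and let $c<a$, $N>0$. With the notation of the context, for every $n\ge1$, $$c<y_{n,1}^{c,N}<y_{n,1}^{c}<x_{n-1,1}^{c,[1]}<y_{n,2}^{c,N}<y_{n,2}^{c}<\cdots<x_{n-1,n-1}^{c,[1]}<y_{n,n}^{c,N}<y_{n,n}^{c}.$$ Moreover each $y_{n,k}^{c,N}$ is a decreasing function of $N$, and for each $k=1,\ldots,n-1$, $$\lim_{N\to\infty}y_{n,1}^{c,N}=c,\qquad \lim_{N\to\infty}y_{n,k+1}^{c,N}=x_{n-1,k}^{c,[1]},$$ $$\lim_{N\to\infty}N\,[y_{n,1}^{c,N}-c]=\frac{-Q_n^c(c)}{B_n^c\,P_{n-1}^{c,[1]}(c)},\qquad \lim_{N\to\infty}N\,[y_{n,k+1}^{c,N}-x_{n-1,k}^{c,[1]}]=\frac{-Q_n^c(x_{n-1,k}^{c,[1]})}{B_n^c\,(x_{n-1,k}^{c,[1]}-c)\,[P_{n-1}^{c,[1]}]'(x_{n-1,k}^{c,[1]})}.$$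
   Context: $\{P_n\}$ is the monic orthogonal polynomial sequence (MOPS) for $\mu$, $\|f\|_\mu^2=\int f^2d\mu$. $\{Q_n^c\}$ is the MOPS for $\langle f,g\rangle_\nu=\int f g\frac{1}{x-c}d\mu$. $\{P_n^{c,[1]}\}$ is the MOPS for $(x-c)d\mu(x)$, i.e. $P_n^{c,[1]}(x)=\frac{1}{x-c}\big(P_{n+1}(x)-\frac{P_{n+1}(c)}{P_n(c)}P_n(x)\big)$. $\{Q_n^{c,N}\}$ is the MOPS for $\langle f,g\rangle_{\nu_N}=\int fg\frac{1}{x-c}d\mu+Nf(c)g(c)$. $B_n^c=\frac{-Q_n^c(c)P_{n-1}(c)}{\|P_{n-1}\|_\mu^2}$. The zeros of $Q_n^c$, $Q_n^{c,N}$, $P_{n-1}^{c,[1]}$ are denoted $y_{n,s}^c$, $y_{n,s}^{c,N}$ ($s=1,\dots,n$), $x_{n-1,s}^{c,[1]}$ ($s=1,\dots,n-1$), each arranged in increasing order. *)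

theory Defs
  imports "HOL-Analysis.Analysis" "HOL-Computational_Algebra.Polynomial"
begin

definition msupport :: "real measure \<Rightarrow> real set" where
  "msupport M = {x. \<forall>e>0. emeasure M (ball x e) > 0}"

definition is_MOPS :: "(real poly \<Rightarrow> real poly \<Rightarrow> real) \<Rightarrow> (nat \<Rightarrow> real poly) \<Rightarrow> bool" where
  "is_MOPS ip P \<longleftrightarrow>
     (\<forall>n. degree (P n) = n \<and> lead_coeff (P n) = 1) \<and>
     (\<forall>n m. n \<noteq> m \<longrightarrow> ip (P n) (P m) = 0) \<and>
     (\<forall>n. ip (P n) (P n) \<noteq> 0)"

definition ip_mu :: "real measure \<Rightarrow> real poly \<Rightarrow> real poly \<Rightarrow> real" where
  "ip_mu M f g = (\<integral>x. poly f x * poly g x \<partial>M)"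

definition ip_nu :: "real measure \<Rightarrow> real \<Rightarrow> real poly \<Rightarrow> real poly \<Rightarrow> real" where
  "ip_nu M c f g = (\<integral>x. poly f x * poly g x / (x - c) \<partial>M)"

definition ip_nuN :: "real measure \<Rightarrow> real \<Rightarrow> real \<Rightarrow> real poly \<Rightarrow> real poly \<Rightarrow> real" where
  "ip_nuN M c N f g = ip_nu M c f g + N * poly f c * poly g c"

definition ip_ker :: "real measure \<Rightarrow> real \<Rightarrow> real poly \<Rightarrow> real poly \<Rightarrow> real" where
  "ip_ker M c f g = (\<integral>x. poly f x * poly g x * (x - c) \<partial>M)"

(* k-th smallest real zero (k = 1, 2, ...) of p *)
definition zero_k :: "real poly \<Rightarrow> nat \<Rightarrow> real" where
  "zero_k p k = sorted_list_of_set {x. poly p x = 0} ! (k - 1)"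

end

theory Submission
  imports Defs
begin

definition orth :: "(real poly \<Rightarrow> real) \<Rightarrow> real poly \<Rightarrow> nat \<Rightarrow> bool" where
  "orth L p m \<longleftrightarrow> (\<forall>q. degree q < m \<longrightarrow> L (p * q) = 0)"

locale linfun =
  fixes L :: "real poly \<Rightarrow> real"
  assumes Ladd: "L (p + q) = L p + L q"
    and Lsmult: "L (smult a p) = a * L p"
begin

lemma L0[simp]: "L 0 = 0"
  using Lsmult[of 0 0] by simp

lemma Lminus: "L (- p) = - L p"
  using Lsmult[of "-1" p] by simp

lemma Ldiff: "L (p - q) = L p - L q"
  using Ladd[of p "-q"] Lminus[of q] by simp

lemma Lsum: "L (sum f S) = (\<Sum>i\<in>S. L (f i))"
  by (induction S rule: infinite_finite_induct) (auto simp: Ladd)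

lemma mops_orth:
  assumes "is_MOPS (\<lambda>f g. L (f * g)) P"
  shows "orth L (P k) k"
  unfolding orth_def
proof (intro allI impI)
  fix q :: "real poly" assume "degree q < k"
  then show "L (P k * q) = 0"
  proof (induction "degree q" arbitrary: q rule: less_induct)
    case less
    define j where "j = degree q"
    define r where "r = q - smult (lead_coeff q) (P j)"
    have Pj: "degree (P j) = j" "lead_coeff (P j) = 1" using assms unfolding is_MOPS_def by metis+
    have jk: "j \<noteq> k" using less j_def by auto
    have o: "L (P k * P j) = 0" using assms jk unfolding is_MOPS_def by auto
    have qr: "q = smult (lead_coeff q) (P j) + r" unfolding r_def by simp
    have "L (P k * q) = lead_coeff q * L (P k * P j) + L (P k * r)"
      by (subst qr) (simp add: algebra_simps Ladd Lsmult)
    also have "L (P k * r) = 0"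
    proof (cases "r = 0")
      case True then show ?thesis by simp
    next
      case False
      have "degree r < degree q"
      proof (cases "j = 0")
        case True
        then have "degree q = 0" using j_def by simp
        then obtain a where "q = [:a:]" by (metis degree_eq_zeroE)
        moreover have "P j = 1" using Pj True by (metis One_nat_def coeff_pCons_0 degree_eq_zeroE lead_coeff_1 one_pCons)
        ultimately have "r = 0" using True unfolding r_def by simp
        then show ?thesis using False by simp
      next
        case False
        have "degree r \<le> j" unfolding r_def j_def using Pj
          by (metis degree_diff_le degree_smult_le j_def le_refl)
        moreover have "coeff r j = 0" unfolding r_def j_def using Pj j_def by simp
        ultimately have "degree r < j" using \<open>r \<noteq> 0\<close>
          by (metis le_neq_implies_less leading_coeff_0_iff)
        then show ?thesis using j_def by simp
      qed
      then show ?thesis using less by auto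
    qed
    finally show ?case using o by simp
  qed
qed

end

lemma poly_nonneg_closure:
  fixes f :: "real poly"
  assumes "lo < hi" "\<forall>x\<in>{lo<..<hi}. poly f x \<ge> 0"
  shows "\<forall>x\<in>{lo..hi}. poly f x \<ge> 0"
proof -
  have cl: "closed {x. 0 \<le> poly f x}"
    by (intro closed_Collect_le) (auto intro: continuous_intros)
  have "closure {lo<..<hi} \<subseteq> {x. 0 \<le> poly f x}"
    using assms(2) by (intro closure_minimal cl) auto
  then show ?thesis using closure_greaterThanLessThan[OF assms(1)] by auto
qed

lemma even_sign:
  fixes f :: "real poly"
  assumes "f \<noteq> 0" "\<forall>z. lo < z \<and> z < hi \<and> poly f z = 0 \<longrightarrow> even (order z f)"
  shows "(\<forall>x\<in>{lo<..<hi}. poly f x \<ge> 0) \<or> (\<forall>x\<in>{lo<..<hi}. poly f x \<le> 0)"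
  using assms
proof (induction "degree f" arbitrary: f rule: less_induct)
  case less
  show ?case
  proof (cases "\<exists>z. lo < z \<and> z < hi \<and> poly f z = 0")
    case False
    show ?thesis
    proof (rule ccontr)
      assume "\<not> ?thesis"
      then obtain x y where xy: "x\<in>{lo<..<hi}" "y\<in>{lo<..<hi}" "poly f x < 0" "poly f y > 0"
        by (auto simp: not_le)
      have "\<exists>z. min x y \<le> z \<and> z \<le> max x y \<and> poly f z = 0"
      proof (cases "x \<le> y")
        case True
        then show ?thesis using IVT[of "poly f" x 0 y] xy by (auto simp: min_def max_def)
      next
        case False
        then show ?thesis using IVT2[of "poly f" x 0 y] xy by (auto simp: min_def max_def)
      qed
      then obtain z where "min x y \<le> z" "z \<le> max x y" "poly f z = 0" by blast
      then show False using False xy by (auto simp: min_def max_def split: if_splits)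
    qed
  next
    case True
    then obtain z where z: "lo < z" "z < hi" "poly f z = 0" by blast
    define k where "k = order z f"
    obtain g where g: "f = [:-z,1:]^k * g" "\<not> [:-z,1:] dvd g"
      using order_decomp[OF less.prems(1), of z] k_def by blast
    have ev: "even k" using less.prems(2) z k_def by blast
    have k0: "k \<noteq> 0" using z less.prems(1) k_def order_root by blast
    have g0: "g \<noteq> 0" using g(2) by auto
    have gz: "poly g z \<noteq> 0" using g(2) by (simp add: poly_eq_0_iff_dvd)
    have dg: "degree g < degree f"
    proof -
      have "degree f = k + degree g" using g g0
        by (simp add: degree_mult_eq degree_power_eq degree_linear_power)
      then show ?thesis using k0 by simp
    qed
    have "\<forall>w. lo < w \<and> w < hi \<and> poly g w = 0 \<longrightarrow> even (order w g)"
    proof (intro allI impI)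
      fix w assume w: "lo < w \<and> w < hi \<and> poly g w = 0"
      have wz: "w \<noteq> z" using w gz by auto
      have "poly f w = 0" using g w by simp
      then have "even (order w f)" using less.prems(2) w by blast
      moreover have "order w f = order w ([:-z,1:]^k) + order w g"
        using g less.prems(1) by (metis order_mult)
      moreover have "order w ([:-z,1:]^k) = 0"
        using wz by (intro order_0I) simp
      ultimately show "even (order w g)" by simp
    qed
    then have IH: "(\<forall>x\<in>{lo<..<hi}. poly g x \<ge> 0) \<or> (\<forall>x\<in>{lo<..<hi}. poly g x \<le> 0)"
      using less.hyps[OF dg g0] by blast
    have pw: "\<And>x. (x - z)^k \<ge> 0" using ev by (simp add: zero_le_even_power)
    have pf: "\<And>x. poly f x = (x - z)^k * poly g x" using g by (simp add: poly_power)
    from IH show ?thesis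
    proof
      assume "\<forall>x\<in>{lo<..<hi}. poly g x \<ge> 0"
      then show ?thesis using pw pf by (simp add: mult_nonneg_nonneg)
    next
      assume "\<forall>x\<in>{lo<..<hi}. poly g x \<le> 0"
      then show ?thesis using pw pf by (simp add: mult_nonneg_nonpos)
    qed
  qed
qed


lemma order_prod_linear:
  fixes S :: "real set"
  assumes "finite S"
  shows "order z (\<Prod>w\<in>S. [:-w,1:]) = (if z \<in> S then 1 else 0)"
  using assms
proof (induction S rule: finite_induct)
  case empty then show ?case by simp
next
  case (insert w S)
  have n1: "(\<Prod>w\<in>S. [:-w,1:]) \<noteq> (0::real poly)"
    using insert.hyps(1) by (subst prod_zero_iff) auto
  have n2: "[:-w,1:] \<noteq> (0::real poly)" by simp
  have ne: "[:-w,1:] * (\<Prod>w\<in>S. [:-w,1:]) \<noteq> 0"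
    using n1 n2 by (metis mult_eq_0_iff)
  have "order z (\<Prod>w\<in>insert w S. [:-w,1:]) = order z [:-w,1:] + order z (\<Prod>w\<in>S. [:-w,1:])"
    by (simp only: prod.insert[OF insert.hyps]) (rule order_mult[OF ne])
  moreover have "order z [:-w,1:] = (if z = w then 1 else 0)"
  proof (cases "z = w")
    case True then show ?thesis using order_power_n_n[of w 1] by simp
  next
    case False then show ?thesis by (simp add: order_0I)
  qed
  ultimately show ?case using insert by auto
qed

locale posfun = linfun +
  fixes lo hi :: real
  assumes lohi: "lo < hi"
    and Lpos: "p \<noteq> 0 \<Longrightarrow> (\<forall>x\<in>{lo..hi}. poly p x \<ge> 0) \<Longrightarrow> L p > 0"
begin

lemma Lsq: "p \<noteq> 0 \<Longrightarrow> L (p * p) > 0"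
  by (intro Lpos) auto

lemma uniq:
  assumes "degree D \<le> k" "\<forall>r. degree r < k \<longrightarrow> L (D * r) = 0"
    and "degree Pk = k" "lead_coeff Pk = 1" "orth L Pk k"
  shows "D = smult (coeff D k) Pk"
proof (rule ccontr)
  define E where "E = D - smult (coeff D k) Pk"
  assume "D \<noteq> smult (coeff D k) Pk"
  then have E0: "E \<noteq> 0" unfolding E_def by simp
  have "degree E \<le> k" unfolding E_def using assms
    by (metis degree_diff_le degree_smult_le)
  moreover have "coeff E k = 0" unfolding E_def using assms by simp
  ultimately have dE: "degree E < k" using E0
    by (metis le_neq_implies_less leading_coeff_0_iff)
  have "E * E = (D - smult (coeff D k) Pk) * E" by (simp add: E_def)
  also have "\<dots> = D * E - smult (coeff D k) (Pk * E)" by (simp add: algebra_simps)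
  finally have "L (E * E) = L (D * E) - coeff D k * L (Pk * E)"
    by (simp add: Ldiff Lsmult)
  also have "\<dots> = 0" using assms(2) assms(5) dE unfolding orth_def by simp
  finally show False using Lsq[OF E0] by simp
qed

lemma zeros:
  assumes "degree p = m" "lead_coeff p = 1" "orth L p m"
  shows "card {x. poly p x = 0} = m \<and> {x. poly p x = 0} \<subseteq> {lo<..<hi}"
proof -
  have p0: "p \<noteq> 0" using assms by auto
  define R where "R = {x. poly p x = 0}"
  have finR: "finite R" unfolding R_def using p0 by (rule poly_roots_finite)
  have cardR: "card R \<le> m" unfolding R_def using card_poly_roots_bound[OF p0] assms by simp
  define S where "S = {z. lo < z \<and> z < hi \<and> poly p z = 0 \<and> odd (order z p)}"
  have SR: "S \<subseteq> R" unfolding S_def R_def by auto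
  have finS: "finite S" using finite_subset[OF SR finR] .
  define q where "q = (\<Prod>w\<in>S. [:-w,1:])"
  have q0: "q \<noteq> 0" unfolding q_def using finS by (simp add: prod_zero_iff)
  have dq: "degree q = card S" unfolding q_def
    by (subst degree_prod_eq_sum_degree) auto
  have oq: "\<And>z. order z q = (if z \<in> S then 1 else 0)" unfolding q_def
    using order_prod_linear[OF finS] by simp
  have pq0: "p * q \<noteq> 0" using p0 q0 by simp
  have ge: "card S \<ge> m"
  proof (rule ccontr)
    assume "\<not> card S \<ge> m"
    then have "degree q < m" using dq by simp
    then have L0: "L (p * q) = 0" using assms(3) unfolding orth_def by blast
    have "\<forall>z. lo < z \<and> z < hi \<and> poly (p*q) z = 0 \<longrightarrow> even (order z (p*q))"
    proof (intro allI impI)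
      fix z assume z: "lo < z \<and> z < hi \<and> poly (p*q) z = 0"
      have o: "order z (p*q) = order z p + order z q" using pq0 by (simp add: order_mult)
      show "even (order z (p*q))"
      proof (cases "poly p z = 0")
        case True
        show ?thesis
        proof (cases "odd (order z p)")
          case True
          then have "z \<in> S" using z \<open>poly p z = 0\<close> unfolding S_def by blast
          then show ?thesis using o oq[of z] True by simp
        next
          case False
          then have "z \<notin> S" unfolding S_def by blast
          then show ?thesis using o oq[of z] False by simp
        qed
      next
        case False
        then have "poly q z = 0" using z by simp
        then have "order z q \<noteq> 0" using q0 order_root by blast
        then have "z \<in> S" using oq by (auto split: if_splits)
        then show ?thesis using False unfolding S_def by auto
      qed
    qed
    from even_sign[OF pq0 this] show False
    proof
      assume "\<forall>x\<in>{lo<..<hi}. poly (p*q) x \<ge> 0"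
      then have "\<forall>x\<in>{lo..hi}. poly (p*q) x \<ge> 0" using poly_nonneg_closure lohi by blast
      then have "L (p*q) > 0" using Lpos pq0 by blast
      then show False using L0 by simp
    next
      assume "\<forall>x\<in>{lo<..<hi}. poly (p*q) x \<le> 0"
      then have "\<forall>x\<in>{lo<..<hi}. poly (-(p*q)) x \<ge> 0" by simp
      then have "\<forall>x\<in>{lo..hi}. poly (-(p*q)) x \<ge> 0" using poly_nonneg_closure lohi by blast
      then have "L (-(p*q)) > 0" using Lpos pq0 by (metis neg_equal_0_iff_equal)
      then show False using L0 Lminus by simp
    qed
  qed
  have "card S = card R" using ge cardR card_mono[OF finR SR] by simp
  then have "S = R" using card_subset_eq[OF finR SR] by simp
  moreover have "S \<subseteq> {lo<..<hi}" unfolding S_def by auto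
  moreover have "card R = m" using ge cardR \<open>card S = card R\<close> by linarith
  ultimately show ?thesis unfolding R_def by simp
qed

end


lemma sd_small:
  fixes p :: "real poly"
  assumes "degree p \<le> m"
  shows "synthetic_div p c = 0 \<or> degree (synthetic_div p c) < m"
proof (cases "degree p = 0")
  case True then show ?thesis by (simp add: synthetic_div_eq_0_iff)
next
  case False
  then have "degree (synthetic_div p c) < m" using assms by (simp add: degree_synthetic_div)
  then show ?thesis by simp
qed

lemma sd_monic:
  fixes p :: "real poly"
  assumes "degree p = Suc m" "lead_coeff p = 1"
  shows "degree (synthetic_div p y) = m \<and> lead_coeff (synthetic_div p y) = 1"
proof -
  define s where "s = synthetic_div p y"
  have ds: "degree s = m" unfolding s_def using assms by (simp add: degree_synthetic_div)
  have eq: "p = [:-y,1:] * s + [:poly p y:]" unfolding s_def using synthetic_div_correct'[of y p] by simp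
  have "coeff p (Suc m) = coeff ([:-y,1:] * s) (Suc m)" by (subst eq) simp
  also have "\<dots> = coeff s m - y * coeff s (Suc m)" by (simp add: algebra_simps)
  also have "coeff s (Suc m) = 0" using ds by (simp add: coeff_eq_0)
  finally show ?thesis using assms ds unfolding s_def by simp
qed

lemma sd_at:
  fixes p :: "real poly"
  shows "poly (synthetic_div p y) y = poly (pderiv p) y"
proof -
  define s where "s = synthetic_div p y"
  have eq: "p = [:-y,1:] * s + [:poly p y:]" unfolding s_def using synthetic_div_correct'[of y p] by simp
  have "pderiv p = pderiv ([:-y,1:] * s + [:poly p y:])" by (subst eq) simp
  also have "\<dots> = pderiv ([:-y,1:] * s)" by (simp add: pderiv_add)
  also have "\<dots> = [:-y,1:] * pderiv s + s * pderiv [:-y,1:]" by (rule pderiv_mult)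
  also have "pderiv [:-y,1:] = 1" by (simp add: pderiv_pCons)
  finally show ?thesis unfolding s_def by simp
qed

lemma monic_diff:
  fixes p q :: "real poly"
  assumes "degree p = k" "lead_coeff p = 1" "degree q = k" "lead_coeff q = 1"
  shows "p - q = 0 \<or> degree (p - q) < k"
proof -
  have "degree (p - q) \<le> k" using assms by (metis degree_diff_le order_refl)
  moreover have "coeff (p - q) k = 0" using assms by simp
  ultimately show ?thesis by (metis le_neq_implies_less leading_coeff_0_iff)
qed

context linfun begin
lemma orth_apply: "orth L p m \<Longrightarrow> r = 0 \<or> degree r < m \<Longrightarrow> L (p * r) = 0"
  unfolding orth_def by auto
end

context posfun begin

lemma wronski:
  assumes A: "degree A = Suc m" "lead_coeff A = 1" "orth L A m"
    and P: "degree P = m" "lead_coeff P = 1" "orth L P m"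
  shows "poly P y \<noteq> 0 \<Longrightarrow> poly (pderiv A) y * poly P y - poly A y * poly (pderiv P) y > 0"
    and "\<not> (poly A y = 0 \<and> poly P y = 0)"
proof -
  define SA where "SA = synthetic_div A y"
  define SP where "SP = synthetic_div P y"
  have SAm0: "degree SA = m \<and> lead_coeff SA = 1" unfolding SA_def by (rule sd_monic[OF A(1,2)])
  have SAm: "degree SA = m" "lead_coeff SA = 1" using SAm0 by blast+
  have SPs: "SP = 0 \<or> degree SP < m" unfolding SP_def using sd_small[of P m] P by simp
  have eqA: "A = [:-y,1:] * SA + [:poly A y:]" unfolding SA_def using synthetic_div_correct'[of y A] by simp
  have eqP: "P = [:-y,1:] * SP + [:poly P y:]" unfolding SP_def using synthetic_div_correct'[of y P] by simp
  have "P \<noteq> 0" using P(2) by auto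
  then have hpos: "L (P * P) > 0" by (rule Lsq)
  have dSAP: "SA - P = 0 \<or> degree (SA - P) < m" using monic_diff[OF SAm P(1,2)] .
  {
    assume Py: "poly P y \<noteq> 0"
    define G where "G = smult (poly P y) SA - smult (poly A y) SP"
    have ea: "[:-y,1:] * SA = A - [:poly A y:]"
      using synthetic_div_correct'[of y A] unfolding SA_def by (metis add_diff_cancel_right')
    have ep: "[:-y,1:] * SP = P - [:poly P y:]"
      using synthetic_div_correct'[of y P] unfolding SP_def by (metis add_diff_cancel_right')
    have "[:-y,1:] * G = smult (poly P y) ([:-y,1:] * SA) - smult (poly A y) ([:-y,1:] * SP)"
      unfolding G_def by (simp only: right_diff_distrib mult_smult_right)
    also have "\<dots> = smult (poly P y) (A - [:poly A y:]) - smult (poly A y) (P - [:poly P y:])"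
      by (simp only: ea ep)
    also have "\<dots> = smult (poly P y) A - smult (poly A y) P"
      by (simp add: smult_diff_right mult.commute)
    finally have a: "[:-y,1:] * G = smult (poly P y) A - smult (poly A y) P" .
    have b: "poly G y = poly (pderiv A) y * poly P y - poly A y * poly (pderiv P) y"
      unfolding G_def SA_def SP_def by (simp add: sd_at)
    have GmP: "G - smult (poly P y) P = smult (poly P y) (SA - P) - smult (poly A y) SP"
      unfolding G_def by (simp add: smult_diff_right)
    have c: "L (G * P) = poly P y * L (P * P)"
    proof -
      have "L (P * (G - smult (poly P y) P)) = poly P y * L (P * (SA - P)) - poly A y * L (P * SP)"
        by (subst GmP) (simp add: algebra_simps Ldiff Lsmult)
      also have "\<dots> = 0" using orth_apply[OF P(3) dSAP] orth_apply[OF P(3) SPs] by simp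
      finally have "L (P * G) - poly P y * L (P * P) = 0" by (simp add: algebra_simps Ldiff Lsmult)
      then show ?thesis by (simp add: mult.commute)
    qed
    have d: "L (G * f) = poly f y * L G" if "degree f \<le> m" for f
    proof -
      define sf where "sf = synthetic_div f y"
      have eqf: "f = [:-y,1:] * sf + [:poly f y:]" unfolding sf_def using synthetic_div_correct'[of y f] by simp
      have sfs: "sf = 0 \<or> degree sf < m" unfolding sf_def using sd_small[OF that] .
      have "G * f = ([:-y,1:] * G) * sf + smult (poly f y) G"
        by (subst eqf) (simp add: algebra_simps)
      also have "\<dots> = smult (poly P y) (A * sf) - smult (poly A y) (P * sf) + smult (poly f y) G"
        by (simp only: a left_diff_distrib mult_smult_left)
      finally have "L (G * f) = poly P y * L (A * sf) - poly A y * L (P * sf) + poly f y * L G"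
        by (simp add: Ladd Ldiff Lsmult)
      then show ?thesis using orth_apply[OF A(3) sfs] orth_apply[OF P(3) sfs] by simp
    qed
    have dG: "degree G \<le> m" unfolding G_def using SAm SPs
      by (metis degree_diff_le degree_smult_le le_trans less_imp_le_nat degree_0 le0)
    have cG: "coeff G m = poly P y"
    proof -
      have "coeff SP m = 0" using SPs by (auto simp: coeff_eq_0)
      then show ?thesis unfolding G_def using SAm by simp
    qed
    have G0: "G \<noteq> 0" using cG Py by auto
    have LG: "L G = L (P * P)"
      using d[of P] c P(1) Py by (simp add: mult.commute)
    have "L (G * G) = poly G y * L (P * P)" using d[OF dG] LG by simp
    moreover have "L (G * G) > 0" using Lsq[OF G0] .
    ultimately show "poly (pderiv A) y * poly P y - poly A y * poly (pderiv P) y > 0"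
      using hpos b by (metis zero_less_mult_pos2)
  }
  show "\<not> (poly A y = 0 \<and> poly P y = 0)"
  proof
    assume z: "poly A y = 0 \<and> poly P y = 0"
    have m0: "m \<noteq> 0"
    proof
      assume "m = 0"
      then have "P = 1" using P by (metis One_nat_def coeff_pCons_0 degree_eq_zeroE lead_coeff_1 one_pCons)
      then show False using z by simp
    qed
    have A1: "A = [:-y,1:] * SA" using eqA z by simp
    have P1: "P = [:-y,1:] * SP" using eqP z by simp
    have SPd: "degree SP < m" using SPs P1 P(1) m0 by auto
    have "L (P * SA) = L (A * SP)" by (subst P1, subst A1) (simp add: algebra_simps)
    also have "\<dots> = 0" using orth_apply[OF A(3)] SPd by simp
    finally have "L (P * SA) = 0" .
    moreover have "L (P * SA) = L (P * P) + L (P * (SA - P))" by (simp add: algebra_simps flip: Ladd)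
    moreover have "L (P * (SA - P)) = 0" using orth_apply[OF P(3) dSAP] .
    ultimately show False using hpos by simp
  qed
qed

end


declare mult_pCons_left [simp del] mult_pCons_right [simp del]

lemma smono_id:
  fixes f :: "nat \<Rightarrow> nat"
  assumes mono: "\<And>i j. i < j \<Longrightarrow> j < n \<Longrightarrow> f i < f j" and bd: "\<And>i. i < n \<Longrightarrow> f i < n"
    and i: "i < n"
  shows "f i = i"
proof -
  have ge: "\<And>i. i < n \<Longrightarrow> f i \<ge> i"
  proof -
    fix i show "i < n \<Longrightarrow> f i \<ge> i"
    proof (induction i)
      case 0 then show ?case by simp
    next
      case (Suc i)
      then have "f i < f (Suc i)" using mono by simp
      then show ?case using Suc by simp
    qed
  qed
  have le: "\<And>k. k < n \<Longrightarrow> f (n - 1 - k) \<le> n - 1 - k"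
  proof -
    fix k show "k < n \<Longrightarrow> f (n - 1 - k) \<le> n - 1 - k"
    proof (induction k)
      case 0 then show ?case using bd[of "n-1"] by simp
    next
      case (Suc k)
      then have "f (n - 1 - Suc k) < f (n - 1 - k)" using mono[of "n - 1 - Suc k" "n - 1 - k"] by simp
      then show ?case using Suc by simp
    qed
  qed
  have "f (n - 1 - (n - 1 - i)) \<le> n - 1 - (n - 1 - i)" using le[of "n - 1 - i"] i by simp
  then have "f i \<le> i" using i by simp
  then show ?thesis using ge[OF i] by simp
qed

locale config =
  fixes Lv :: "real poly \<Rightarrow> real" and a b c :: real and P Q P1 :: "nat \<Rightarrow> real poly"
    and QN :: "real \<Rightarrow> nat \<Rightarrow> real poly" and n :: nat
  assumes Lv_pos: "posfun Lv a b"
    and ca: "c < a"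
    and MP: "is_MOPS (\<lambda>f g. Lv ([:-c,1:] * (f*g))) P"
    and MQ: "is_MOPS (\<lambda>f g. Lv (f*g)) Q"
    and MP1: "is_MOPS (\<lambda>f g. Lv ([:-c,1:]^2 * (f*g))) P1"
    and MQN: "\<forall>N>0. is_MOPS (\<lambda>f g. Lv (f*g) + N * poly (f*g) c) (QN N)"
    and n1: "n \<ge> 1"
begin

definition "Lmu h = Lv ([:-c,1:] * h)"
definition "Lk h = Lv ([:-c,1:]^2 * h)"
definition "LN N h = Lv h + N * poly h c"
definition "m = n - 1"
definition "Pm = P m"
definition "A = [:-c,1:] * P1 m"

lemma nm: "n = Suc m" using n1 unfolding m_def by simp

lemma ab: "a < b" using Lv_pos posfun.lohi by blast

interpretation v: posfun Lv a b by (rule Lv_pos)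

lemma lin_mu: "linfun Lmu"
  by unfold_locales (simp_all add: Lmu_def distrib_left v.Ladd v.Lsmult)
lemma lin_k: "linfun Lk"
  by unfold_locales (simp_all add: Lk_def distrib_left v.Ladd v.Lsmult)
lemma lin_N: "linfun (LN N)"
  by unfold_locales (simp_all add: LN_def algebra_simps v.Ladd v.Lsmult)

lemma pf_mu: "posfun Lmu a b"
proof -
  interpret linfun Lmu by (rule lin_mu)
  show ?thesis
  proof (unfold_locales)
    show "a < b" by (rule ab)
    fix p :: "real poly" assume p: "p \<noteq> 0" "\<forall>x\<in>{a..b}. 0 \<le> poly p x"
    have "[:-c,1:] * p \<noteq> 0" using p by simp
    moreover have "\<forall>x\<in>{a..b}. 0 \<le> poly ([:-c,1:] * p) x" using p ca by simp
    ultimately show "0 < Lmu p" unfolding Lmu_def by (rule v.Lpos)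
  qed
qed

lemma pf_k: "posfun Lk a b"
proof -
  interpret linfun Lk by (rule lin_k)
  show ?thesis
  proof (unfold_locales)
    show "a < b" by (rule ab)
    fix p :: "real poly" assume p: "p \<noteq> 0" "\<forall>x\<in>{a..b}. 0 \<le> poly p x"
    have "[:-c,1:]^2 * p \<noteq> 0" using p by simp
    moreover have "\<forall>x\<in>{a..b}. 0 \<le> poly ([:-c,1:]^2 * p) x" using p ca by simp
    ultimately show "0 < Lk p" unfolding Lk_def by (rule v.Lpos)
  qed
qed

lemma pf_N: assumes "N > 0" shows "posfun (LN N) c b"
proof -
  interpret linfun "LN N" by (rule lin_N)
  show ?thesis
  proof (unfold_locales)
    show "c < b" using ab ca by simp
    fix p :: "real poly" assume p: "p \<noteq> 0" "\<forall>x\<in>{c..b}. 0 \<le> poly p x"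
    have "\<forall>x\<in>{a..b}. 0 \<le> poly p x" using p ca by auto
    then have "Lv p > 0" using p v.Lpos by blast
    moreover have "N * poly p c \<ge> 0" using p assms ab ca by auto
    ultimately show "0 < LN N p" unfolding LN_def by simp
  qed
qed

interpretation mu: posfun Lmu a b by (rule pf_mu)
interpretation k: posfun Lk a b by (rule pf_k)

lemma oP: "orth Lmu (P k) k"
  by (rule mu.mops_orth) (use MP in \<open>simp add: Lmu_def\<close>)
lemma oQ: "orth Lv (Q k) k"
  by (rule v.mops_orth) (use MQ in simp)
lemma oP1: "orth Lk (P1 k) k"
  by (rule k.mops_orth) (use MP1 in \<open>simp add: Lk_def\<close>)
lemma oQN: "N > 0 \<Longrightarrow> orth (LN N) (QN N k) k"
proof -
  assume N: "N > 0"
  interpret linfun "LN N" by (rule lin_N)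
  show ?thesis by (rule mops_orth) (use MQN N in \<open>simp add: LN_def\<close>)
qed

lemma dP: "degree (P k) = k" "lead_coeff (P k) = 1" using MP unfolding is_MOPS_def by metis+
lemma dQ: "degree (Q k) = k" "lead_coeff (Q k) = 1" using MQ unfolding is_MOPS_def by metis+
lemma dP1: "degree (P1 k) = k" "lead_coeff (P1 k) = 1" using MP1 unfolding is_MOPS_def by metis+
lemma dQN: "N > 0 \<Longrightarrow> degree (QN N k) = k" "N > 0 \<Longrightarrow> lead_coeff (QN N k) = 1"
  using MQN unfolding is_MOPS_def by metis+

lemma zP: "card {x. poly (P k) x = 0} = k \<and> {x. poly (P k) x = 0} \<subseteq> {a<..<b}"
  by (rule mu.zeros[OF dP oP])
lemma zQ: "card {x. poly (Q k) x = 0} = k \<and> {x. poly (Q k) x = 0} \<subseteq> {a<..<b}"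
  by (rule v.zeros[OF dQ oQ])
lemma zP1: "card {x. poly (P1 k) x = 0} = k \<and> {x. poly (P1 k) x = 0} \<subseteq> {a<..<b}"
  by (rule k.zeros[OF dP1 oP1])
lemma zQN: "N > 0 \<Longrightarrow> card {x. poly (QN N k) x = 0} = k \<and> {x. poly (QN N k) x = 0} \<subseteq> {c<..<b}"
proof -
  assume N: "N > 0"
  interpret posfun "LN N" c b by (rule pf_N[OF N])
  show ?thesis by (rule zeros[OF dQN[OF N] oQN[OF N]])
qed

lemma dPm: "degree Pm = m" "lead_coeff Pm = 1" unfolding Pm_def using dP by auto
lemma dA: "degree A = n" "lead_coeff A = 1"
proof -
  have "P1 m \<noteq> 0" using dP1[of m] by auto
  then show "degree A = n"
    unfolding A_def using dP1[of m] nm by (simp add: degree_mult_eq)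
  have "lead_coeff ([:-c,1:] * P1 m) = lead_coeff [:-c,1:] * lead_coeff (P1 m)" by (rule lead_coeff_mult)
  then show "lead_coeff A = 1" unfolding A_def using dP1[of m] by simp
qed
lemma Pm0: "Pm \<noteq> 0" using dPm by auto

lemma oA: "orth Lmu A m"
  unfolding orth_def
proof (intro allI impI)
  fix r :: "real poly" assume "degree r < m"
  then have "Lk (P1 m * r) = 0" using oP1 unfolding orth_def by blast
  moreover have eq: "[:-c,1:] * (A * r) = [:-c,1:]^2 * (P1 m * r)"
    unfolding A_def power2_eq_square by (simp only: mult.assoc)
  ultimately show "Lmu (A * r) = 0" unfolding Lmu_def Lk_def by (simp only: eq)
qed

lemma oPm: "orth Lmu Pm m" unfolding Pm_def by (rule oP)

lemma Ac: "poly A c = 0" unfolding A_def by simp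

lemma decomp:
  assumes F: "degree F = n" "lead_coeff F = 1"
    and o: "\<And>r. degree r < m \<Longrightarrow> Lv (F * ([:-c,1:] * r)) = 0"
  shows "F = A + smult (coeff (F - A) m) Pm"
proof -
  have D: "F - A = 0 \<or> degree (F - A) < n" by (rule monic_diff[OF F dA])
  then have dD: "degree (F - A) \<le> m" using nm by auto
  have "\<forall>r. degree r < m \<longrightarrow> Lmu ((F - A) * r) = 0"
  proof (intro allI impI)
    fix r :: "real poly" assume r: "degree r < m"
    have "Lmu ((F - A) * r) = Lmu (F * r) - Lmu (A * r)"
      using linfun.Ldiff[OF lin_mu] by (simp add: algebra_simps)
    also have "Lmu (A * r) = 0" using oA r unfolding orth_def by blast
    also have "Lmu (F * r) = Lv (F * ([:-c,1:] * r))" unfolding Lmu_def by (simp add: algebra_simps)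
    finally show "Lmu ((F - A) * r) = 0" using o[OF r] by simp
  qed
  from mu.uniq[OF dD this dPm oPm] show ?thesis by (simp add: algebra_simps)
qed

definition "d = coeff (Q n - A) m"
definition "e N = coeff (QN N n - A) m"

lemma deg_shift: "degree (r::real poly) < m \<Longrightarrow> degree ([:-c,1:] * r) < n"
  using nm by (cases "r = 0") (auto simp: degree_mult_eq)

lemma Qdec: "Q n = A + smult d Pm"
  unfolding d_def
proof (rule decomp[OF dQ])
  fix r :: "real poly" assume "degree r < m"
  then show "Lv (Q n * ([:-c,1:] * r)) = 0" using oQ deg_shift unfolding orth_def by blast
qed

lemma QNdec: assumes N: "N > 0" shows "QN N n = A + smult (e N) Pm"
  unfolding e_def
proof (rule decomp[OF dQN[OF N]])
  fix r :: "real poly" assume "degree r < m"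
  then have "LN N (QN N n * ([:-c,1:] * r)) = 0" using oQN[OF N] deg_shift unfolding orth_def by blast
  then show "Lv (QN N n * ([:-c,1:] * r)) = 0" unfolding LN_def by simp
qed


definition "F t = A + smult t Pm"
definition "R x = - (poly A x / poly Pm x)"
definition "cnt x = card {p. poly Pm p = 0 \<and> p < x}"
definition "W x = poly (pderiv A) x * poly Pm x - poly A x * poly (pderiv Pm) x"
definition "zk t k = zero_k (F t) k"

lemma dA': "degree A = Suc m" using dA nm by simp

lemma Wpos: "poly Pm y \<noteq> 0 \<Longrightarrow> W y > 0"
  unfolding W_def by (rule mu.wronski(1)[OF dA' dA(2) oA dPm oPm])

lemma nocommon: "\<not> (poly A y = 0 \<and> poly Pm y = 0)"
  by (rule mu.wronski(2)[OF dA' dA(2) oA dPm oPm])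

lemma finPz: "finite {p. poly Pm p = 0}" using poly_roots_finite[OF Pm0] .

lemma finPz': "finite {p. poly Pm p = 0 \<and> p < x}"
  by (rule finite_subset[OF _ finPz]) blast

lemma cnt_mono: "x \<le> y \<Longrightarrow> cnt x \<le> cnt y"
  unfolding cnt_def by (rule card_mono[OF finPz']) auto

lemma cnt_bound: "cnt x \<le> m"
proof -
  have "cnt x \<le> card {p. poly Pm p = 0}"
    unfolding cnt_def by (rule card_mono[OF finPz]) auto
  then show ?thesis using zP[of m] unfolding Pm_def by simp
qed

lemma cnt_strict:
  assumes "poly Pm z = 0" "x \<le> z" "z < y"
  shows "cnt x < cnt y"
  unfolding cnt_def
proof (rule psubset_card_mono)
  show "finite {p. poly Pm p = 0 \<and> p < y}" by (rule finPz')
  have "z \<in> {p. poly Pm p = 0 \<and> p < y}" "z \<notin> {p. poly Pm p = 0 \<and> p < x}"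
    using assms by auto
  moreover have "{p. poly Pm p = 0 \<and> p < x} \<subseteq> {p. poly Pm p = 0 \<and> p < y}"
    using assms by auto
  ultimately show "{p. poly Pm p = 0 \<and> p < x} \<subset> {p. poly Pm p = 0 \<and> p < y}"
    by blast
qed

lemma R_deriv:
  assumes "poly Pm z \<noteq> 0"
  shows "DERIV R z :> - (W z / (poly Pm z * poly Pm z))"
proof -
  have "DERIV (\<lambda>x. poly A x / poly Pm x) z :> (poly (pderiv A) z * poly Pm z - poly A z * poly (pderiv Pm) z) / (poly Pm z * poly Pm z)"
    by (rule DERIV_divide) (use assms in auto)
  then have "DERIV (\<lambda>x. - (poly A x / poly Pm x)) z :> - ((poly (pderiv A) z * poly Pm z - poly A z * poly (pderiv Pm) z) / (poly Pm z * poly Pm z))"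
    by (rule DERIV_minus)
  then show ?thesis unfolding R_def W_def .
qed

lemma R_mono:
  assumes "x < y" "\<And>z. x \<le> z \<Longrightarrow> z \<le> y \<Longrightarrow> poly Pm z \<noteq> 0"
  shows "R y < R x"
proof (rule DERIV_neg_imp_decreasing[OF assms(1)])
  fix z assume z: "x \<le> z" "z \<le> y"
  have P: "poly Pm z \<noteq> 0" using assms(2)[OF z] .
  have PP: "poly Pm z * poly Pm z > 0" using P by (cases "poly Pm z > 0") (auto simp: mult_neg_neg)
  have "W z / (poly Pm z * poly Pm z) > 0" using Wpos[OF P] PP by simp
  then show "\<exists>y. DERIV R z :> y \<and> y < 0" using R_deriv[OF P] by auto
qed

lemma R_mono':
  assumes "x < y" "poly Pm x \<noteq> 0" "poly Pm y \<noteq> 0" "cnt x = cnt y"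
  shows "R y < R x"
proof (rule R_mono[OF assms(1)])
  fix z assume z: "x \<le> z" "z \<le> y"
  show "poly Pm z \<noteq> 0"
  proof
    assume Pz: "poly Pm z = 0"
    then have "z < y" using z assms(3) by (cases "z = y") auto
    then have "cnt x < cnt y" using cnt_strict[OF Pz z(1)] by simp
    then show False using assms(4) by simp
  qed
qed

definition "good t \<longleftrightarrow> card {x. poly (F t) x = 0} = n"

lemma F_zero_R:
  assumes "poly (F t) x = 0"
  shows "poly Pm x \<noteq> 0" "R x = t"
proof -
  have eq: "poly A x + t * poly Pm x = 0" using assms unfolding F_def by simp
  show P: "poly Pm x \<noteq> 0"
  proof
    assume "poly Pm x = 0"
    then have "poly A x = 0" using eq by simp
    then show False using nocommon \<open>poly Pm x = 0\<close> by blast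
  qed
  show "R x = t" unfolding R_def using eq P by (simp add: field_simps)
qed

lemma good_props:
  assumes g: "good t" and k: "1 \<le> k" "k \<le> n"
  shows "poly (F t) (zk t k) = 0" "poly Pm (zk t k) \<noteq> 0" "R (zk t k) = t" "cnt (zk t k) = k - 1"
proof -
  define Z where "Z = {x. poly (F t) x = 0}"
  have cZ: "card Z = n" using g unfolding good_def Z_def .
  have finZ: "finite Z"
  proof (rule ccontr)
    assume "infinite Z"
    then have "card Z = 0" by simp
    then show False using cZ n1 by simp
  qed
  define xs where "xs = sorted_list_of_set Z"
  have lxs: "length xs = n" unfolding xs_def using cZ by simp
  have sxs: "set xs = Z" unfolding xs_def using finZ by simp
  have srt: "sorted_wrt (<) xs" unfolding xs_def by simp
  have inZ: "xs ! i \<in> Z" if "i < n" for i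
  proof -
    have "xs ! i \<in> set xs" using lxs that by simp
    then show ?thesis using sxs by simp
  qed
  have zk_eq: "\<And>i. i < n \<Longrightarrow> zk t (Suc i) = xs ! i"
    unfolding zk_def zero_k_def xs_def Z_def by simp
  have mono: "\<And>i j. i < j \<Longrightarrow> j < n \<Longrightarrow> cnt (xs ! i) < cnt (xs ! j)"
  proof -
    fix i j assume ij: "i < j" "j < n"
    have lt: "xs ! i < xs ! j" using sorted_wrt_nth_less[OF srt ij(1)] ij(2) lxs by simp
    have zi: "poly (F t) (xs ! i) = 0" "poly (F t) (xs ! j) = 0" using inZ ij unfolding Z_def by auto
    have le: "cnt (xs ! i) \<le> cnt (xs ! j)" using cnt_mono lt by simp
    show "cnt (xs ! i) < cnt (xs ! j)"
    proof (rule ccontr)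
      assume "\<not> ?thesis"
      then have "cnt (xs ! i) = cnt (xs ! j)" using le by simp
      then have "R (xs ! j) < R (xs ! i)"
        using R_mono'[OF lt F_zero_R(1)[OF zi(1)] F_zero_R(1)[OF zi(2)]] by simp
      then show False using F_zero_R(2)[OF zi(1)] F_zero_R(2)[OF zi(2)] by simp
    qed
  qed
  have bd: "cnt (xs ! i) < n" if "i < n" for i using cnt_bound[of "xs ! i"] nm by simp
  have ki: "k - 1 < n" using k by simp
  have cid: "cnt (xs ! (k - 1)) = k - 1"
    by (rule smono_id[where f="\<lambda>i. cnt (xs ! i)" and n=n, OF mono bd ki])
  have zkx: "zk t k = xs ! (k - 1)" using zk_eq[OF ki] k by simp
  have z: "poly (F t) (zk t k) = 0" using inZ[OF ki] zkx unfolding Z_def by simp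
  show "poly (F t) (zk t k) = 0" by (rule z)
  show "poly Pm (zk t k) \<noteq> 0" by (rule F_zero_R(1)[OF z])
  show "R (zk t k) = t" by (rule F_zero_R(2)[OF z])
  show "cnt (zk t k) = k - 1" using cid zkx by simp
qed

lemma CMP:
  assumes gs: "good s" and gt: "good t" and st: "s < t" and k: "1 \<le> k" "k \<le> n"
  shows "zk t k < zk s k"
proof (rule ccontr)
  assume "\<not> ?thesis"
  then have le: "zk s k \<le> zk t k" by simp
  note ps = good_props[OF gs k] and pt = good_props[OF gt k]
  show False
  proof (cases "zk s k = zk t k")
    case True then show False using ps(3) pt(3) st by simp
  next
    case False
    then have "zk s k < zk t k" using le by simp
    from R_mono'[OF this ps(2) pt(2)] ps(4) pt(4) have "R (zk t k) < R (zk s k)" by simp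
    then show False using ps(3) pt(3) st by simp
  qed
qed

lemma CMP2:
  assumes gs: "good s" and gt: "good t" and k: "1 \<le> k" "k < n"
  shows "zk s k < zk t (Suc k)"
proof (rule ccontr)
  assume "\<not> ?thesis"
  then have "zk t (Suc k) \<le> zk s k" by simp
  then have "cnt (zk t (Suc k)) \<le> cnt (zk s k)" by (rule cnt_mono)
  moreover have "cnt (zk s k) = k - 1" using good_props(4)[OF gs k(1)] k by simp
  moreover have "cnt (zk t (Suc k)) = k" using good_props(4)[OF gt, of "Suc k"] k by simp
  ultimately show False using k by simp
qed

end


declare mult_pCons_left [simp del] mult_pCons_right [simp del]

context config begin

interpretation v: posfun Lv a b by (rule Lv_pos)
interpretation mu: posfun Lmu a b by (rule pf_mu)

lemma FQ: "F d = Q n" unfolding F_def using Qdec by simp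
lemma FQN: "N > 0 \<Longrightarrow> F (e N) = QN N n" unfolding F_def using QNdec by simp
lemma F0: "F 0 = A" unfolding F_def by simp

lemma goodQ: "good d" unfolding good_def FQ using zQ[of n] by simp
lemma goodN: "N > 0 \<Longrightarrow> good (e N)" unfolding good_def using FQN zQN[of N n] by simp

lemma zerosA: "{x. poly A x = 0} = insert c {x. poly (P1 m) x = 0}"
  unfolding A_def by auto

lemma cP1: "c \<notin> {x. poly (P1 m) x = 0}" "\<forall>z\<in>{x. poly (P1 m) x = 0}. c < z"
  using zP1[of m] ca by auto

lemma finP1: "finite {x. poly (P1 m) x = 0}"
  by (rule poly_roots_finite) (use dP1[of m] in auto)

lemma sortedA: "sorted_list_of_set {x. poly A x = 0} = c # sorted_list_of_set {x. poly (P1 m) x = 0}"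
proof -
  define Z1 where "Z1 = {x. poly (P1 m) x = 0}"
  have fin: "finite (insert c Z1)" using finP1 unfolding Z1_def by simp
  have Mn: "Min (insert c Z1) = c"
    by (rule Min_eqI[OF fin]) (use cP1 in \<open>auto simp: Z1_def less_imp_le\<close>)
  have rm: "insert c Z1 - {c} = Z1" using cP1 unfolding Z1_def by auto
  show ?thesis unfolding zerosA
    using sorted_list_of_set_nonempty[OF fin] Mn rm unfolding Z1_def by simp
qed

lemma good0: "good 0"
proof -
  have "card {x. poly A x = 0} = Suc (card {x. poly (P1 m) x = 0})"
    unfolding zerosA using finP1 cP1 by simp
  then show ?thesis unfolding good_def F0 using zP1[of m] nm by simp
qed

lemma zk01: "zk 0 1 = c"
  unfolding zk_def zero_k_def F0 sortedA by simp

lemma zk0S: "1 \<le> k \<Longrightarrow> zk 0 (Suc k) = zero_k (P1 m) k"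
  unfolding zk_def zero_k_def F0 sortedA by (cases k) auto

lemma Pc: "poly Pm c \<noteq> 0" using zP[of m] ca unfolding Pm_def by auto
lemma Qc: "poly (Q n) c \<noteq> 0" using zQ[of n] ca by auto

lemma d_neg: "d < 0"
proof -
  have z: "poly (Q n) (zk d 1) = 0" using good_props(1)[OF goodQ] n1 FQ by simp
  then have "zk d 1 > a" using zQ[of n] by auto
  show ?thesis
  proof (rule ccontr)
    assume "\<not> d < 0"
    then consider "d = 0" | "d > 0" by linarith
    then show False
    proof cases
      case 1
      then have "Q n = A" using FQ F0 by simp
      then show False using Qc Ac by simp
    next
      case 2
      have "zk d 1 < zk 0 1" using CMP[OF good0 goodQ 2 order_refl n1] .
      then show False using zk01 \<open>zk d 1 > a\<close> ca by simp
    qed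
  qed
qed

definition "J = Lv Pm"
definition "Bc = - poly (Q n) c * poly Pm c / Lmu (Pm * Pm)"

lemma Pm_mult_const: "Pm * [:k:] = smult k Pm"
  by (simp add: mult_pCons_right)

lemma PJ: "poly Pm c * J = Lv (Pm * Pm)"
proof -
  define s where "s = synthetic_div Pm c"
  have ea: "[:-c,1:] * s = Pm - [:poly Pm c:]"
    using synthetic_div_correct'[of c Pm] unfolding s_def by (metis add_diff_cancel_right')
  have ss: "s = 0 \<or> degree s < m" unfolding s_def using sd_small[of Pm m] dPm by simp
  have "Pm * ([:-c,1:] * s) = Pm * Pm - smult (poly Pm c) Pm"
    by (simp only: ea right_diff_distrib Pm_mult_const)
  then have "Lv (Pm * ([:-c,1:] * s)) = Lv (Pm * Pm) - poly Pm c * J"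
    unfolding J_def by (simp add: v.Ldiff v.Lsmult)
  moreover have "Lv (Pm * ([:-c,1:] * s)) = Lmu (Pm * s)" unfolding Lmu_def by (simp add: ac_simps)
  moreover have "Lmu (Pm * s) = 0" using mu.orth_apply[OF oPm ss] .
  ultimately show ?thesis by simp
qed

lemma LvPP: "Lv (Pm * Pm) > 0" using v.Lsq Pm0 by blast

lemma J0: "J \<noteq> 0" using PJ LvPP by auto

lemma LmuPP: "Lmu (Pm * Pm) = - poly (Q n) c * J"
proof -
  define Rr where "Rr = [:-c,1:] * Pm - Q n"
  have d1: "degree ([:-c,1:] * Pm) = n" using dPm nm Pm0 by (simp add: degree_mult_eq)
  have l1: "lead_coeff ([:-c,1:] * Pm) = 1"
  proof -
    have "lead_coeff ([:-c,1:] * Pm) = lead_coeff [:-c,1:] * lead_coeff Pm" by (rule lead_coeff_mult)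
    then show ?thesis using dPm by simp
  qed
  have "Rr = 0 \<or> degree Rr < n" unfolding Rr_def by (rule monic_diff[OF d1 l1 dQ])
  then have dR: "degree Rr \<le> m" using nm by auto
  define s where "s = synthetic_div Rr c"
  have ea: "[:-c,1:] * s = Rr - [:poly Rr c:]"
    using synthetic_div_correct'[of c Rr] unfolding s_def by (metis add_diff_cancel_right')
  have ss: "s = 0 \<or> degree s < m" unfolding s_def using sd_small[OF dR] .
  have Rc: "poly Rr c = - poly (Q n) c" unfolding Rr_def by simp
  have "Lmu (Pm * Pm) = Lv (Pm * ([:-c,1:] * Pm))" unfolding Lmu_def by (simp add: ac_simps)
  also have "[:-c,1:] * Pm = Q n + Rr" unfolding Rr_def by simp
  also have "Lv (Pm * (Q n + Rr)) = Lv (Q n * Pm) + Lv (Pm * Rr)" by (simp add: distrib_left v.Ladd ac_simps)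
  also have "Lv (Q n * Pm) = 0" using oQ[of n] dPm nm unfolding orth_def by simp
  also have "Pm * Rr = Pm * ([:-c,1:] * s) + smult (poly Rr c) Pm"
    by (simp only: ea right_diff_distrib Pm_mult_const)
  also have "Lv (Pm * ([:-c,1:] * s) + smult (poly Rr c) Pm) = Lmu (Pm * s) + poly Rr c * J"
    unfolding Lmu_def J_def by (simp add: v.Ladd v.Lsmult ac_simps)
  also have "Lmu (Pm * s) = 0" using mu.orth_apply[OF oPm ss] .
  finally show ?thesis using Rc by simp
qed

lemma Bc_eq: "Bc = poly Pm c / J"
  unfolding Bc_def LmuPP using Qc J0 by (simp add: field_simps)

lemma Bc_pos: "Bc > 0"
proof -
  have "poly Pm c * J > 0" using PJ LvPP by simp
  then have "poly Pm c / J > 0" using J0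
    by (metis divide_pos_pos divide_neg_neg zero_less_mult_iff)
  then show ?thesis using Bc_eq by simp
qed

lemma e_eq:
  assumes N: "N > 0"
  shows "e N = d / (1 + N * Bc)"
proof -
  have "degree (1::real poly) < n" using n1 by simp
  then have "LN N (QN N n * 1) = 0" using oQN[OF N, of n] unfolding orth_def by blast
  then have e1: "Lv (QN N n) + N * poly (QN N n) c = 0" unfolding LN_def by simp
  have "degree (1::real poly) < n" using n1 by simp
  then have "Lv (Q n * 1) = 0" using oQ[of n] unfolding orth_def by blast
  then have e2: "Lv A + d * J = 0" using Qdec unfolding J_def by (simp add: v.Ladd v.Lsmult)
  have e3: "Lv (QN N n) = Lv A + e N * J" using QNdec[OF N] unfolding J_def by (simp add: v.Ladd v.Lsmult)
  have e4: "poly (QN N n) c = e N * poly Pm c" using QNdec[OF N] Ac by simp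
  have Pcb: "poly Pm c = Bc * J" using Bc_eq J0 by simp
  have "J * (e N * (1 + N * Bc) - d) = 0"
    using e1 e2 e3 e4 Pcb by (simp add: algebra_simps)
  then have "e N * (1 + N * Bc) = d" using J0 by simp
  moreover have "1 + N * Bc > 0" using N Bc_pos by (simp add: add_pos_pos)
  ultimately show ?thesis by (simp add: field_simps)
qed

lemma e_bounds: "N > 0 \<Longrightarrow> d < e N \<and> e N < 0"
proof -
  assume N: "N > 0"
  define g where "g = 1 + N * Bc"
  have g: "g > 1" unfolding g_def using N Bc_pos by simp
  have "d * (g - 1) < 0" using d_neg g by (intro mult_neg_pos) auto
  then have "d * g < d" by (simp add: algebra_simps)
  then have "d < d / g" using g by (simp add: field_simps)
  moreover have "d / g < 0" using d_neg g by (simp add: divide_neg_pos)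
  ultimately show ?thesis unfolding e_eq[OF N] g_def by simp
qed

lemma e_mono: "0 < N1 \<Longrightarrow> N1 < N2 \<Longrightarrow> e N1 < e N2"
proof -
  assume N: "0 < N1" "N1 < N2"
  have p1: "N1 * Bc > 0" using N Bc_pos by simp
  have g1: "1 + N1 * Bc > 0" using p1 by linarith
  have "N1 * Bc < N2 * Bc" using N Bc_pos by (simp add: mult_strict_right_mono)
  then have g: "1 + N1 * Bc > 0" "1 + N1 * Bc < 1 + N2 * Bc" using g1 by simp_all
  have "0 < (1 + N1 * Bc) * (1 + N2 * Bc)" using g by simp
  then have "d / (1 + N1 * Bc) < d / (1 + N2 * Bc)"
    by (rule divide_strict_left_mono_neg[OF g(2) d_neg])
  moreover have "e N2 = d / (1 + N2 * Bc)" using N by (intro e_eq) simp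
  ultimately show ?thesis unfolding e_eq[OF N(1)] by simp
qed

end


declare mult_pCons_left [simp del] mult_pCons_right [simp del]

context config begin

lemma ev_pos: "eventually (\<lambda>N::real. N > 0) at_top"
  by (rule eventually_gt_at_top)

lemma e_tendsto: "((\<lambda>N. e N) \<longlongrightarrow> 0) at_top"
proof -
  have "LIM N at_top. N * Bc :> at_top"
    by (rule filterlim_at_top_mult_tendsto_pos[OF tendsto_const Bc_pos filterlim_ident])
  then have "LIM N at_top. 1 + N * Bc :> at_top"
    by (rule filterlim_tendsto_add_at_top[OF tendsto_const])
  then have "((\<lambda>N. d / (1 + N * Bc)) \<longlongrightarrow> 0) at_top"
    by (intro tendsto_divide_0[OF tendsto_const] filterlim_at_top_imp_at_infinity)
  moreover have "eventually (\<lambda>N. d / (1 + N * Bc) = e N) at_top"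
    using ev_pos by eventually_elim (simp add: e_eq)
  ultimately show ?thesis by (rule Lim_transform_eventually)
qed

lemma Ne_tendsto: "((\<lambda>N. N * e N) \<longlongrightarrow> d / Bc) at_top"
proof -
  have "((\<lambda>N. inverse N) \<longlongrightarrow> (0::real)) at_top"
    by (rule tendsto_inverse_0_at_top[OF filterlim_ident])
  then have "((\<lambda>N. d / (inverse N + Bc)) \<longlongrightarrow> d / (0 + Bc)) at_top"
    using Bc_pos by (intro tendsto_intros) auto
  moreover have "eventually (\<lambda>N. d / (inverse N + Bc) = N * e N) at_top"
    using ev_pos
  proof eventually_elim
    case (elim N)
    then show ?case using e_eq[OF elim] by (simp add: field_simps)
  qed
  ultimately show ?thesis by (simp add: Lim_transform_eventually)
qed

lemma zk_gt:
  assumes k: "1 \<le> k" "k \<le> n"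
  shows "eventually (\<lambda>N. zk 0 k < zk (e N) k) at_top"
  using ev_pos
proof eventually_elim
  case (elim N)
  show ?case using CMP[OF goodN[OF elim] good0 _ k] e_bounds[OF elim] by simp
qed

lemma zk_conv:
  assumes k: "1 \<le> k" "k \<le> n"
  shows "((\<lambda>N. zk (e N) k) \<longlongrightarrow> zk 0 k) at_top"
proof (rule order_tendstoI)
  define z0 where "z0 = zk 0 k"
  note p0 = good_props[OF good0 k, folded z0_def]
  fix l assume l: "l < zk 0 k"
  show "eventually (\<lambda>N. l < zk (e N) k) at_top"
    using zk_gt[OF k] by eventually_elim (use l in simp)
next
  define z0 where "z0 = zk 0 k"
  note p0 = good_props[OF good0 k, folded z0_def]
  fix u assume u: "zk 0 k < u"
  have "continuous (at z0) (poly Pm)" by (intro continuous_intros)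
  from continuous_at_avoid[OF this p0(2)] obtain \<delta> where
    \<delta>: "\<delta> > 0" "\<And>y. dist z0 y < \<delta> \<Longrightarrow> poly Pm y \<noteq> 0" by blast
  define w where "w = z0 + min (u - z0) (\<delta> / 2)"
  have zw: "z0 < w" "w \<le> u" unfolding w_def using u \<delta> z0_def by auto
  have Pw: "\<And>y. z0 \<le> y \<Longrightarrow> y \<le> w \<Longrightarrow> poly Pm y \<noteq> 0"
    using \<delta> unfolding w_def dist_real_def by auto
  have Rw: "R w < 0" using R_mono[OF zw(1) Pw] p0(3) by simp
  have "eventually (\<lambda>N. R w < e N) at_top"
    using e_tendsto Rw by (rule order_tendstoD)
  then show "eventually (\<lambda>N. zk (e N) k < u) at_top"
    using ev_pos zk_gt[OF k]
  proof eventually_elim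
    case (elim N)
    note pN = good_props[OF goodN[OF elim(2)] k]
    have "zk (e N) k < w"
    proof (rule ccontr)
      assume "\<not> ?thesis"
      then have wu: "w \<le> zk (e N) k" by simp
      have "cnt z0 \<le> cnt w" "cnt w \<le> cnt (zk (e N) k)" using cnt_mono zw wu by auto
      then have cw: "cnt w = cnt (zk (e N) k)" using p0(4) pN(4) by simp
      show False
      proof (cases "w = zk (e N) k")
        case True then show False using pN(3) elim(1) by simp
      next
        case False
        then have "w < zk (e N) k" using wu by simp
        from R_mono'[OF this Pw[OF less_imp_le[OF zw(1)] order_refl] pN(2) cw]
        show False using pN(3) elim(1) by simp
      qed
    qed
    then show ?case using zw by simp
  qed
qed

definition "R1 z = - (W z / (poly Pm z * poly Pm z))"

lemma zk_rate:
  assumes k: "1 \<le> k" "k \<le> n"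
  shows "((\<lambda>N. N * (zk (e N) k - zk 0 k)) \<longlongrightarrow> (d / Bc) / R1 (zk 0 k)) at_top"
proof -
  define z0 where "z0 = zk 0 k"
  note p0 = good_props[OF good0 k, folded z0_def]
  have R1n: "R1 z0 \<noteq> 0" unfolding R1_def using Wpos[OF p0(2)] p0(2) by simp
  have "DERIV R z0 :> R1 z0" unfolding R1_def by (rule R_deriv[OF p0(2)])
  then have q: "((\<lambda>x. (R x - R z0) / (x - z0)) \<longlongrightarrow> R1 z0) (at z0)"
    by (simp add: has_field_derivative_iff)
  have fl: "filterlim (\<lambda>N. zk (e N) k) (at z0) at_top"
    unfolding filterlim_at
  proof
    show "eventually (\<lambda>N. zk (e N) k \<in> UNIV \<and> zk (e N) k \<noteq> z0) at_top"
      using zk_gt[OF k] by eventually_elim (auto simp: z0_def)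
    show "((\<lambda>N. zk (e N) k) \<longlongrightarrow> z0) at_top" unfolding z0_def by (rule zk_conv[OF k])
  qed
  have "((\<lambda>N. (R (zk (e N) k) - R z0) / (zk (e N) k - z0)) \<longlongrightarrow> R1 z0) at_top"
    by (rule filterlim_compose[OF q fl])
  then have "((\<lambda>N. (N * e N) / ((R (zk (e N) k) - R z0) / (zk (e N) k - z0))) \<longlongrightarrow> (d / Bc) / R1 z0) at_top"
    by (intro tendsto_divide Ne_tendsto R1n)
  moreover have "eventually (\<lambda>N. (N * e N) / ((R (zk (e N) k) - R z0) / (zk (e N) k - z0)) = N * (zk (e N) k - z0)) at_top"
    using ev_pos zk_gt[OF k]
  proof eventually_elim
    case (elim N)
    note pN = good_props[OF goodN[OF elim(1)] k]
    have en: "e N \<noteq> 0" using e_bounds[OF elim(1)] by simp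
    have "zk (e N) k - z0 \<noteq> 0" using elim(2) z0_def by simp
    then show ?case using pN(3) p0(3) en by (simp add: field_simps)
  qed
  ultimately show ?thesis unfolding z0_def by (rule Lim_transform_eventually)
qed

end


declare mult_pCons_left [simp del] mult_pCons_right [simp del]

context config begin

lemma pderivA: "poly (pderiv A) x = (x - c) * poly (pderiv (P1 m)) x + poly (P1 m) x"
proof -
  have "pderiv A = [:-c,1:] * pderiv (P1 m) + P1 m * pderiv [:-c,1:]"
    unfolding A_def by (rule pderiv_mult)
  moreover have "pderiv [:-c,1:] = 1" by (simp add: pderiv_pCons)
  ultimately show ?thesis by simp
qed

lemma rate_val:
  assumes k: "1 \<le> k" "k \<le> n"
  shows "(d / Bc) / R1 (zk 0 k) = - poly (Q n) (zk 0 k) / (Bc * poly (pderiv A) (zk 0 k))"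
proof -
  define z0 where "z0 = zk 0 k"
  note p0 = good_props[OF good0 k, folded z0_def]
  have Az: "poly A z0 = 0" using p0(1) F0 by simp
  have Wz: "W z0 = poly (pderiv A) z0 * poly Pm z0" unfolding W_def using Az by simp
  have "W z0 > 0" using Wpos[OF p0(2)] .
  then have A1: "poly (pderiv A) z0 \<noteq> 0" using Wz by auto
  have Qz: "poly (Q n) z0 = d * poly Pm z0" using Qdec Az by simp
  have Bn: "Bc \<noteq> 0" using Bc_pos by simp
  show ?thesis unfolding z0_def[symmetric] R1_def Wz Qz using A1 p0(2) Bn
    by (simp add: field_simps)
qed

theorem main_abs:
  "(card {x. poly (Q n) x = 0} = n \<and> card {x. poly (P1 (n - 1)) x = 0} = n - 1 \<and>
      (\<forall>N>0. card {x. poly (QN N n) x = 0} = n)) \<and>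
     (\<forall>N>0. c < zero_k (QN N n) 1 \<and>
      (\<forall>k\<in>{1..n}. zero_k (QN N n) k < zero_k (Q n) k) \<and>
      (\<forall>k\<in>{1..n-1}. zero_k (Q n) k < zero_k (P1 (n - 1)) k \<and>
      zero_k (P1 (n - 1)) k < zero_k (QN N n) (k + 1))) \<and>
     (\<forall>k\<in>{1..n}. \<forall>N1 N2. 0 < N1 \<longrightarrow> N1 < N2 \<longrightarrow> zero_k (QN N2 n) k < zero_k (QN N1 n) k) \<and>
     (((\<lambda>N. zero_k (QN N n) 1) \<longlongrightarrow> c) at_top) \<and>
     (\<forall>k\<in>{1..n-1}. ((\<lambda>N. zero_k (QN N n) (k + 1)) \<longlongrightarrow> zero_k (P1 (n - 1)) k) at_top) \<and>
     (((\<lambda>N. N * (zero_k (QN N n) 1 - c)) \<longlongrightarrow> - poly (Q n) c / (Bc * poly (P1 (n - 1)) c)) at_top) \<and>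
     (\<forall>k\<in>{1..n-1}. ((\<lambda>N. N * (zero_k (QN N n) (k + 1) - zero_k (P1 (n - 1)) k))
      \<longlongrightarrow> - poly (Q n) (zero_k (P1 (n - 1)) k) /
      (Bc * (zero_k (P1 (n - 1)) k - c) * poly (pderiv (P1 (n - 1))) (zero_k (P1 (n - 1)) k))) at_top)"
proof -
  have mm: "n - 1 = m" unfolding m_def ..
  have ZQ: "zero_k (Q n) k = zk d k" for k unfolding zk_def FQ ..
  have ZQN: "N > 0 \<Longrightarrow> zero_k (QN N n) k = zk (e N) k" for N k unfolding zk_def using FQN by simp
  have ZP1: "1 \<le> k \<Longrightarrow> zero_k (P1 m) k = zk 0 (Suc k)" for k using zk0S by simp
  have EQN: "eventually (\<lambda>N. zk (e N) k = zero_k (QN N n) k) at_top" for k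
    using ev_pos by eventually_elim (simp add: ZQN)
  have n1': "1 \<le> n" by (rule n1)
  have c1: "card {x. poly (Q n) x = 0} = n" using zQ by simp
  have c2: "card {x. poly (P1 (n - 1)) x = 0} = n - 1" using zP1 by simp
  have c3: "\<forall>N>0. card {x. poly (QN N n) x = 0} = n" using zQN by simp
  have part2: "\<forall>N>0. c < zero_k (QN N n) 1 \<and>
      (\<forall>k\<in>{1..n}. zero_k (QN N n) k < zero_k (Q n) k) \<and>
      (\<forall>k\<in>{1..n-1}. zero_k (Q n) k < zero_k (P1 (n - 1)) k \<and>
      zero_k (P1 (n - 1)) k < zero_k (QN N n) (k + 1))"
  proof (intro allI impI conjI ballI)
    fix N :: real assume N: "N > 0"
    note eb = e_bounds[OF N]
    show "c < zero_k (QN N n) 1"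
      using CMP[OF goodN[OF N] good0 _ order_refl n1'] eb zk01 ZQN[OF N] by simp
    fix k assume k: "k \<in> {1..n}"
    then show "zero_k (QN N n) k < zero_k (Q n) k"
      using CMP[OF goodQ goodN[OF N]] eb ZQN[OF N] ZQ by auto
  next
    fix N :: real and k assume N: "N > 0" and k: "k \<in> {1..n-1}"
    note eb = e_bounds[OF N]
    have k1: "1 \<le> k" "k < n" using k n1 by auto
    show "zero_k (Q n) k < zero_k (P1 (n - 1)) k"
      using CMP2[OF goodQ good0 k1] ZQ ZP1[OF k1(1)] mm by simp
    show "zero_k (P1 (n - 1)) k < zero_k (QN N n) (k + 1)"
      using CMP[OF goodN[OF N] good0 _, of "Suc k"] k1 eb ZQN[OF N] ZP1[OF k1(1)] mm by simp
  qed
  have part3: "\<forall>k\<in>{1..n}. \<forall>N1 N2. 0 < N1 \<longrightarrow> N1 < N2 \<longrightarrow> zero_k (QN N2 n) k < zero_k (QN N1 n) k"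
  proof (intro ballI allI impI)
    fix k and N1 N2 :: real assume k: "k \<in> {1..n}" and N: "0 < N1" "N1 < N2"
    have N2: "N2 > 0" using N by linarith
    show "zero_k (QN N2 n) k < zero_k (QN N1 n) k"
      using CMP[OF goodN[OF N(1)] goodN[OF N2] e_mono[OF N]] k ZQN[OF N(1)] ZQN[OF N2] by auto
  qed
  have part4: "((\<lambda>N. zero_k (QN N n) 1) \<longlongrightarrow> c) at_top"
    using Lim_transform_eventually[OF zk_conv[OF order_refl n1'] EQN] zk01 by simp
  have part5: "\<forall>k\<in>{1..n-1}. ((\<lambda>N. zero_k (QN N n) (k + 1)) \<longlongrightarrow> zero_k (P1 (n - 1)) k) at_top"
  proof
    fix k assume k: "k \<in> {1..n-1}"
    have k1: "1 \<le> Suc k" "Suc k \<le> n" using k n1 by auto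
    show "((\<lambda>N. zero_k (QN N n) (k + 1)) \<longlongrightarrow> zero_k (P1 (n - 1)) k) at_top"
      using Lim_transform_eventually[OF zk_conv[OF k1] EQN] ZP1[of k] k mm by simp
  qed
  have EQN2: "eventually (\<lambda>N. N * (zk (e N) k - zk 0 k) = N * (zero_k (QN N n) k - zk 0 k)) at_top" for k
    using ev_pos by eventually_elim (simp add: ZQN)
  have part6: "((\<lambda>N. N * (zero_k (QN N n) 1 - c)) \<longlongrightarrow> - poly (Q n) c / (Bc * poly (P1 (n - 1)) c)) at_top"
  proof -
    have "((\<lambda>N. N * (zero_k (QN N n) 1 - zk 0 1)) \<longlongrightarrow> (d / Bc) / R1 (zk 0 1)) at_top"
      by (rule Lim_transform_eventually[OF zk_rate[OF order_refl n1'] EQN2])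
    moreover have "(d / Bc) / R1 (zk 0 1) = - poly (Q n) c / (Bc * poly (P1 (n - 1)) c)"
      using rate_val[OF order_refl n1'] zk01 pderivA[of c] mm by simp
    ultimately show ?thesis using zk01 by simp
  qed
  have part7: "\<forall>k\<in>{1..n-1}. ((\<lambda>N. N * (zero_k (QN N n) (k + 1) - zero_k (P1 (n - 1)) k))
      \<longlongrightarrow> - poly (Q n) (zero_k (P1 (n - 1)) k) /
      (Bc * (zero_k (P1 (n - 1)) k - c) * poly (pderiv (P1 (n - 1))) (zero_k (P1 (n - 1)) k))) at_top"
  proof
    fix k assume k: "k \<in> {1..n-1}"
    have k1: "1 \<le> Suc k" "Suc k \<le> n" using k n1 by auto
    define x where "x = zero_k (P1 m) k"
    have xz: "zk 0 (Suc k) = x" unfolding x_def using ZP1[of k] k by simp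
    have "x \<in> {y. poly (P1 m) y = 0}"
    proof -
      have "poly A x = 0" using good_props(1)[OF good0 k1] F0 xz by simp
      moreover have "x \<noteq> c"
      proof
        assume "x = c"
        have "cnt (zk 0 (Suc k)) = k" using good_props(4)[OF good0 k1] by simp
        moreover have "cnt (zk 0 1) = 0" using good_props(4)[OF good0 order_refl n1'] by simp
        ultimately show False using xz zk01 \<open>x = c\<close> k by simp
      qed
      ultimately show ?thesis unfolding A_def by simp
    qed
    then have P1x: "poly (P1 m) x = 0" by simp
    have "((\<lambda>N. N * (zero_k (QN N n) (Suc k) - zk 0 (Suc k))) \<longlongrightarrow> (d / Bc) / R1 (zk 0 (Suc k))) at_top"
      by (rule Lim_transform_eventually[OF zk_rate[OF k1] EQN2])
    moreover have "(d / Bc) / R1 (zk 0 (Suc k)) = - poly (Q n) x / (Bc * (x - c) * poly (pderiv (P1 m)) x)"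
      using rate_val[OF k1] xz pderivA[of x] P1x by (simp add: mult.assoc)
    ultimately show "((\<lambda>N. N * (zero_k (QN N n) (k + 1) - zero_k (P1 (n - 1)) k))
      \<longlongrightarrow> - poly (Q n) (zero_k (P1 (n - 1)) k) /
      (Bc * (zero_k (P1 (n - 1)) k - c) * poly (pderiv (P1 (n - 1))) (zero_k (P1 (n - 1)) k))) at_top"
      using xz mm unfolding x_def by simp
  qed
  show ?thesis by (intro conjI c1 c2 c3 part2 part3 part4 part5 part6 part7)
qed

end


declare mult_pCons_left [simp del] mult_pCons_right [simp del]

lemma meas_poly[measurable]: "(\<lambda>x. poly h x) \<in> borel_measurable (borel :: real measure)"
  by (intro borel_measurable_continuous_onI continuous_intros)

lemma meas_Lv_borel: "(\<lambda>x. poly h x / (x - c)) \<in> borel_measurable (borel :: real measure)"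
  by measurable

locale mset =
  fixes M :: "real measure" and a b c :: real
  assumes borel: "sets M = sets borel"
    and moments: "\<forall>k::nat. integrable M (\<lambda>x. x ^ k)"
    and supp_inf: "infinite (msupport M)"
    and hull: "convex hull (msupport M) = {a..b}"
    and ca: "c < a"
begin

lemma space_M: "space M = UNIV" using sets_eq_imp_space_eq[OF borel] by simp

lemma meas_M: "f \<in> borel_measurable borel \<Longrightarrow> f \<in> borel_measurable M"
  unfolding measurable_cong_sets[OF borel refl] .

lemma fin: "finite_measure M"
proof
  have "integrable M (\<lambda>x::real. 1::real)" using moments[rule_format, of 0] by simp
  then have "(\<integral>\<^sup>+ x. ennreal 1 \<partial>M) \<noteq> \<infinity>" by (rule integrableD(2))
  then show "emeasure M (space M) \<noteq> \<infinity>" by (simp add: nn_integral_const)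
qed

interpretation finite_measure M by (rule fin)

lemma supp_sub: "msupport M \<subseteq> {a..b}" using hull hull_subset[of "msupport M" convex] by simp

lemma ab: "a < b"
proof (rule ccontr)
  assume "\<not> a < b"
  then have "{a..b} \<subseteq> {a}" by auto
  then have "finite (msupport M)" using supp_sub by (meson finite.emptyI finite_insert finite_subset)
  then show False using supp_inf by simp
qed

lemma AE_ab: "AE x in M. x \<in> {a..b}"
proof -
  define FF where "FF = {ball x e | x e. e > 0 \<and> emeasure M (ball x e) = 0}"
  have op: "\<And>S. S \<in> FF \<Longrightarrow> open S" unfolding FF_def by auto
  obtain FF' where FF': "FF' \<subseteq> FF" "countable FF'" "\<Union>FF' = \<Union>FF" using Lindelof[OF op] by blast
  have null: "\<Union>FF' \<in> null_sets M"
  proof -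
    have "(\<Union>S\<in>FF'. S) \<in> null_sets M"
    proof (rule null_sets_UN'[OF FF'(2)])
      fix S assume "S \<in> FF'"
      then have "S \<in> FF" using FF'(1) by blast
      then obtain x e where S: "S = ball x e" "emeasure M (ball x e) = 0" unfolding FF_def by blast
      have "S \<in> sets M" unfolding borel S(1) by simp
      then show "S \<in> null_sets M" using S by (simp add: null_sets_def)
    qed
    then show ?thesis by simp
  qed
  have sub: "{x\<in>space M. \<not> x \<in> {a..b}} \<subseteq> \<Union>FF'"
  proof
    fix x assume x: "x \<in> {x\<in>space M. \<not> x \<in> {a..b}}"
    then have "x \<notin> msupport M" using supp_sub by auto
    then obtain e where e: "e > 0" "\<not> emeasure M (ball x e) > 0" unfolding msupport_def by auto
    then have "emeasure M (ball x e) = 0" by (simp add: not_gr_zero)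
    then have "ball x e \<in> FF" using e unfolding FF_def by blast
    moreover have "x \<in> ball x e" using e by simp
    ultimately show "x \<in> \<Union>FF'" using FF'(3) by blast
  qed
  show ?thesis by (rule AE_I'[OF null sub])
qed

definition "Lv h = (\<integral>x. poly h x / (x - c) \<partial>M)"

lemma int_Lv: "integrable M (\<lambda>x. poly h x / (x - c))"
proof -
  have "continuous_on {a..b} (\<lambda>x. poly h x / (x - c))"
    using ca by (intro continuous_intros) auto
  then have "compact ((\<lambda>x. poly h x / (x - c)) ` {a..b})"
    by (intro compact_continuous_image) auto
  then have "bounded ((\<lambda>x. poly h x / (x - c)) ` {a..b})" by (rule compact_imp_bounded)
  then obtain K where K: "\<And>x. x \<in> {a..b} \<Longrightarrow> norm (poly h x / (x - c)) \<le> K"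
    unfolding bounded_iff by blast
  have "AE x in M. norm (poly h x / (x - c)) \<le> K"
    using AE_ab by eventually_elim (rule K)
  then show ?thesis
    by (rule integrable_const_bound) (rule meas_M[OF meas_Lv_borel])
qed

lemma lin: "linfun Lv"
proof
  fix p q :: "real poly" and r :: real
  show "Lv (p + q) = Lv p + Lv q"
    unfolding Lv_def by (simp add: add_divide_distrib Bochner_Integration.integral_add[OF int_Lv int_Lv])
  show "Lv (smult r p) = r * Lv p"
    unfolding Lv_def by (simp add: times_divide_eq_right[symmetric] del: times_divide_eq_right)
qed

lemma pos: "posfun Lv a b"
proof -
  interpret linfun Lv by (rule lin)
  show ?thesis
  proof
    show "a < b" by (rule ab)
    fix h :: "real poly" assume h: "h \<noteq> 0" "\<forall>x\<in>{a..b}. 0 \<le> poly h x"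
    have nn: "AE x in M. 0 \<le> poly h x / (x - c)"
      using AE_ab by eventually_elim (use h ca in auto)
    have ge: "Lv h \<ge> 0" unfolding Lv_def by (rule integral_nonneg_AE[OF nn])
    show "0 < Lv h"
    proof (rule ccontr)
      assume "\<not> 0 < Lv h"
      then have "Lv h = 0" using ge by simp
      then have "AE x in M. poly h x / (x - c) = 0"
        unfolding Lv_def using integral_nonneg_eq_0_iff_AE[OF int_Lv nn] by simp
      then have ae: "AE x in M. poly h x = 0"
        using AE_ab by eventually_elim (use ca in auto)
      define Z where "Z = {x. poly h x = 0}"
      have finZ: "finite Z" unfolding Z_def using poly_roots_finite[OF h(1)] .
      have "infinite (msupport M - Z)" using supp_inf finZ by (meson Diff_infinite_finite)
      then obtain x0 where x0: "x0 \<in> msupport M" "x0 \<notin> Z"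
        by (metis Diff_iff finite.emptyI ex_in_conv)
      have "open (- Z)" using finZ by (simp add: finite_imp_closed open_Compl)
      then obtain e where e: "e > 0" "ball x0 e \<subseteq> - Z" using x0(2) open_contains_ball by blast
      from ae obtain N where N: "{x \<in> space M. \<not> poly h x = 0} \<subseteq> N" "emeasure M N = 0" "N \<in> sets M"
        by (rule AE_E)
      have "ball x0 e \<subseteq> N" using e N(1) unfolding Z_def space_M by auto
      then have "emeasure M (ball x0 e) \<le> emeasure M N" using N(3) by (rule emeasure_mono)
      then have "emeasure M (ball x0 e) = 0" using N(2) by simp
      moreover have "emeasure M (ball x0 e) > 0" using x0(1) e(1) unfolding msupport_def by blast
      ultimately show False by simp
    qed
  qed
qed

lemma ip_mu_eq: "ip_mu M f g = Lv ([:-c,1:] * (f * g))"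
  unfolding ip_mu_def Lv_def
proof (rule integral_cong_AE)
  show "(\<lambda>x. poly f x * poly g x) \<in> borel_measurable M" by (intro meas_M) measurable
  show "(\<lambda>x. poly ([:-c,1:] * (f * g)) x / (x - c)) \<in> borel_measurable M" by (rule meas_M[OF meas_Lv_borel])
  show "AE x in M. poly f x * poly g x = poly ([:-c,1:] * (f * g)) x / (x - c)"
    using AE_ab by eventually_elim (use ca in auto)
qed

lemma ip_ker_eq: "ip_ker M c f g = Lv ([:-c,1:]^2 * (f * g))"
  unfolding ip_ker_def Lv_def
proof (rule integral_cong_AE)
  show "(\<lambda>x. poly f x * poly g x * (x - c)) \<in> borel_measurable M" by (intro meas_M) measurable
  show "(\<lambda>x. poly ([:-c,1:]^2 * (f * g)) x / (x - c)) \<in> borel_measurable M" by (rule meas_M[OF meas_Lv_borel])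
  show "AE x in M. poly f x * poly g x * (x - c) = poly ([:-c,1:]^2 * (f * g)) x / (x - c)"
    using AE_ab by eventually_elim (use ca in \<open>auto simp: power2_eq_square\<close>)
qed

lemma ip_nu_eq: "ip_nu M c f g = Lv (f * g)"
  unfolding ip_nu_def Lv_def by simp

lemma ip_nuN_eq: "ip_nuN M c N f g = Lv (f * g) + N * poly (f * g) c"
  unfolding ip_nuN_def ip_nu_eq by simp

end


declare mult_pCons_left [simp del] mult_pCons_right [simp del]

theorem theorem2:
  fixes M :: "real measure" and a b c :: real
    and P Q P1 :: "nat \<Rightarrow> real poly" and QN :: "real \<Rightarrow> nat \<Rightarrow> real poly"
    and n :: nat
  assumes borel: "sets M = sets borel"
    and ac: "absolutely_continuous lborel M"
    and moments: "\<forall>k::nat. integrable M (\<lambda>x. x ^ k)"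
    and supp_inf: "infinite (msupport M)"
    and hull: "convex hull (msupport M) = {a..b}"
    and ca: "c < a"
    and P: "is_MOPS (ip_mu M) P"
    and Q: "is_MOPS (ip_nu M c) Q"
    and P1: "is_MOPS (ip_ker M c) P1"
    and QN: "\<forall>N>0. is_MOPS (ip_nuN M c N) (QN N)"
    and n: "n \<ge> 1"
  defines "B \<equiv> - poly (Q n) c * poly (P (n - 1)) c / ip_mu M (P (n - 1)) (P (n - 1))"
  shows
    "(card {x. poly (Q n) x = 0} = n \<and> card {x. poly (P1 (n - 1)) x = 0} = n - 1 \<and>
      (\<forall>N>0. card {x. poly (QN N n) x = 0} = n)) \<and>
     (\<forall>N>0. c < zero_k (QN N n) 1 \<and>
      (\<forall>k\<in>{1..n}. zero_k (QN N n) k < zero_k (Q n) k) \<and>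
      (\<forall>k\<in>{1..n-1}. zero_k (Q n) k < zero_k (P1 (n - 1)) k \<and>
      zero_k (P1 (n - 1)) k < zero_k (QN N n) (k + 1))) \<and>
     (\<forall>k\<in>{1..n}. \<forall>N1 N2. 0 < N1 \<longrightarrow> N1 < N2 \<longrightarrow> zero_k (QN N2 n) k < zero_k (QN N1 n) k) \<and>
     (((\<lambda>N. zero_k (QN N n) 1) \<longlongrightarrow> c) at_top) \<and>
     (\<forall>k\<in>{1..n-1}. ((\<lambda>N. zero_k (QN N n) (k + 1)) \<longlongrightarrow> zero_k (P1 (n - 1)) k) at_top) \<and>
     (((\<lambda>N. N * (zero_k (QN N n) 1 - c)) \<longlongrightarrow> - poly (Q n) c / (B * poly (P1 (n - 1)) c)) at_top) \<and>
     (\<forall>k\<in>{1..n-1}. ((\<lambda>N. N * (zero_k (QN N n) (k + 1) - zero_k (P1 (n - 1)) k))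
      \<longlongrightarrow> - poly (Q n) (zero_k (P1 (n - 1)) k) /
      (B * (zero_k (P1 (n - 1)) k - c) * poly (pderiv (P1 (n - 1))) (zero_k (P1 (n - 1)) k))) at_top)"
proof -
  interpret ms: mset M a b c using borel moments supp_inf hull ca by unfold_locales
  have e1: "ip_mu M = (\<lambda>f g. ms.Lv ([:-c,1:] * (f * g)))" by (intro ext) (rule ms.ip_mu_eq)
  have e2: "ip_nu M c = (\<lambda>f g. ms.Lv (f * g))" by (intro ext) (rule ms.ip_nu_eq)
  have e3: "ip_ker M c = (\<lambda>f g. ms.Lv ([:-c,1:]^2 * (f * g)))" by (intro ext) (rule ms.ip_ker_eq)
  have e4: "ip_nuN M c N = (\<lambda>f g. ms.Lv (f * g) + N * poly (f * g) c)" for N by (intro ext) (rule ms.ip_nuN_eq)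
  have MP': "is_MOPS (\<lambda>f g. ms.Lv ([:-c,1:] * (f * g))) P" using P unfolding e1 .
  have MQ': "is_MOPS (\<lambda>f g. ms.Lv (f * g)) Q" using Q unfolding e2 .
  have MP1': "is_MOPS (\<lambda>f g. ms.Lv ([:-c,1:]^2 * (f * g))) P1" using P1 unfolding e3 .
  have MQN': "\<forall>N>0. is_MOPS (\<lambda>f g. ms.Lv (f * g) + N * poly (f * g) c) (QN N)" using QN unfolding e4 .
  interpret cf: config ms.Lv a b c P Q P1 QN n
    by (rule config.intro[OF ms.pos ca MP' MQ' MP1' MQN' n])
  have BB: "cf.Bc = B"
    unfolding B_def cf.Bc_def cf.Lmu_def cf.Pm_def cf.m_def e1 by simp
  show ?thesis using cf.main_abs unfolding BB .
qed


end
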